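(* Let $m\ge 38$ be even and let $G$ be a graph with maximum spectral radius among all $H(4,3)$-free graphs with $m$ edges and no isolated vertices. Let $\mathbf{x}$ be the Perron vector of $G$, $u^*$ a vertex maximizing $x_{u^*}$, $N = N(u^* )$, and $A_+ = \{v\in N : d_N(v)\ge 1\}$. Then the induced subgraph $G[A_+]$ is connected.
   Context: All graphs are simple and undirected; $\rho(G)$ is the largest adjacency eigenvalue and the Perron vector is the positive unit eigenvector for $\rho(G)$ (the extremal $G$ is connected). $H(4,3)$ is the graph formed by a cycle of length $4$ and a triangle sharing exactly one common vertex. $N(v)$ denotes the neighbourhood of $v$, $d_S(v)=|N(v)\cap S|$, and $G[S]$ is the subgraph induced by $S$. *)

theory Defs
  imports Main "HOL-Library.Disjoint_Sets" Complex_Main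
begin

definition graph :: "'a set \<Rightarrow> ('a \<Rightarrow> 'a \<Rightarrow> bool) \<Rightarrow> bool" where
  "graph V E \<longleftrightarrow> finite V \<and> (\<forall>u v. E u v \<longrightarrow> u \<in> V \<and> v \<in> V \<and> u \<noteq> v \<and> E v u)"

definition edges :: "'a set \<Rightarrow> ('a \<Rightarrow> 'a \<Rightarrow> bool) \<Rightarrow> 'a set set" where
  "edges V E = {{u, v} | u v. u \<in> V \<and> v \<in> V \<and> E u v}"

definition num_edges :: "'a set \<Rightarrow> ('a \<Rightarrow> 'a \<Rightarrow> bool) \<Rightarrow> nat" where
  "num_edges V E = card (edges V E)"

definition no_isolated :: "'a set \<Rightarrow> ('a \<Rightarrow> 'a \<Rightarrow> bool) \<Rightarrow> bool" where
  "no_isolated V E \<longleftrightarrow> (\<forall>v\<in>V. \<exists>u\<in>V. E v u)"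

definition nbhd :: "'a set \<Rightarrow> ('a \<Rightarrow> 'a \<Rightarrow> bool) \<Rightarrow> 'a \<Rightarrow> 'a set" where
  "nbhd V E v = {u \<in> V. E v u}"

definition adj_eigvec :: "'a set \<Rightarrow> ('a \<Rightarrow> 'a \<Rightarrow> bool) \<Rightarrow> real \<Rightarrow> ('a \<Rightarrow> real) \<Rightarrow> bool" where
  "adj_eigvec V E lam x \<longleftrightarrow> (\<exists>v\<in>V. x v \<noteq> 0) \<and>
     (\<forall>v\<in>V. (\<Sum>u\<in>nbhd V E v. x u) = lam * x v)"

definition adj_eigenvalue :: "'a set \<Rightarrow> ('a \<Rightarrow> 'a \<Rightarrow> bool) \<Rightarrow> real \<Rightarrow> bool" where
  "adj_eigenvalue V E lam \<longleftrightarrow> (\<exists>x. adj_eigvec V E lam x)"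

text \<open>Spectral radius: the largest adjacency eigenvalue (all eigenvalues are real).\<close>
definition spectral_radius :: "'a set \<Rightarrow> ('a \<Rightarrow> 'a \<Rightarrow> bool) \<Rightarrow> real" where
  "spectral_radius V E = Max {lam. adj_eigenvalue V E lam}"

definition perron_vector :: "'a set \<Rightarrow> ('a \<Rightarrow> 'a \<Rightarrow> bool) \<Rightarrow> ('a \<Rightarrow> real) \<Rightarrow> bool" where
  "perron_vector V E x \<longleftrightarrow> (\<forall>v\<in>V. x v > 0) \<and> (\<Sum>v\<in>V. (x v)^2) = 1 \<and>
     adj_eigvec V E (spectral_radius V E) x"

text \<open>H(4,3): a 4-cycle a-b-c-d-a and a triangle a-e-f-a sharing exactly the vertex a.
  H(4,3)-free: no (not necessarily induced) subgraph isomorphic to H(4,3).\<close>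
definition H43_free :: "'a set \<Rightarrow> ('a \<Rightarrow> 'a \<Rightarrow> bool) \<Rightarrow> bool" where
  "H43_free V E \<longleftrightarrow> \<not> (\<exists>a\<in>V. \<exists>b\<in>V. \<exists>c\<in>V. \<exists>d\<in>V. \<exists>e\<in>V. \<exists>f\<in>V.
      distinct [a, b, c, d, e, f] \<and>
      E a b \<and> E b c \<and> E c d \<and> E d a \<and> E a e \<and> E e f \<and> E f a)"

definition induced_connected :: "('a \<Rightarrow> 'a \<Rightarrow> bool) \<Rightarrow> 'a set \<Rightarrow> bool" where
  "induced_connected E S \<longleftrightarrow>
     (\<forall>a\<in>S. \<forall>b\<in>S. (\<lambda>u v. u \<in> S \<and> v \<in> S \<and> E u v)\<^sup>*\<^sup>* a b)"

end

theory Submission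
  imports Defs "HOL-Computational_Algebra.Polynomial"
begin

definition HV :: "nat \<Rightarrow> nat set" where "HV k = {0..k+2}"
definition HE :: "nat \<Rightarrow> nat \<Rightarrow> nat \<Rightarrow> bool" where
  "HE k i j \<longleftrightarrow> (i=0 \<and> j=1) \<or> (i=1 \<and> j=0) \<or> (i=0 \<and> j=2) \<or> (i=2 \<and> j=0) \<or>
     (i \<le> 1 \<and> 3 \<le> j \<and> j \<le> k+2) \<or> (j \<le> 1 \<and> 3 \<le> i \<and> i \<le> k+2)"

lemma HE_cover: "HE k i j \<Longrightarrow> i \<le> 1 \<or> j \<le> 1" by (auto simp: HE_def)

lemma H_graph: "graph (HV k) (HE k)" unfolding graph_def HV_def HE_def by auto

lemma H_noiso: "no_isolated (HV k) (HE k)"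
  unfolding no_isolated_def HV_def HE_def
proof
  fix v assume v: "v \<in> {0..k+2}"
  show "\<exists>u\<in>{0..k + 2}. v = 0 \<and> u = 1 \<or> v = 1 \<and> u = 0 \<or> v = 0 \<and> u = 2 \<or> v = 2 \<and> u = 0 \<or>
          v \<le> 1 \<and> 3 \<le> u \<and> u \<le> k + 2 \<or> u \<le> 1 \<and> 3 \<le> v \<and> v \<le> k + 2"
  proof (cases "v = 0")
    case True then show ?thesis by (intro bexI[of _ 1]) auto
  next
    case False then show ?thesis using v by (intro bexI[of _ 0]) auto
  qed
qed

lemma three_le1: "x \<le> 1 \<Longrightarrow> y \<le> 1 \<Longrightarrow> z \<le> (1::nat) \<Longrightarrow> x \<noteq> y \<Longrightarrow> y \<noteq> z \<Longrightarrow> x \<noteq> z \<Longrightarrow> False"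
  by arith

lemma H_free: "H43_free (HV k) (HE k)"
  unfolding H43_free_def
proof clarify
  fix a b c d e f
  assume dist: "distinct [a,b,c,d,e,f]" and
    ab: "HE k a b" and bc: "HE k b c" and cd: "HE k c d" and da: "HE k d a" and
    ae: "HE k a e" and ef: "HE k e f" and fa: "HE k f a"
  have dd: "a \<noteq> b" "a \<noteq> c" "a \<noteq> d" "a \<noteq> e" "a \<noteq> f" "b \<noteq> c" "b \<noteq> d" "b \<noteq> e" "b \<noteq> f"
     "c \<noteq> d" "c \<noteq> e" "c \<noteq> f" "d \<noteq> e" "d \<noteq> f" "e \<noteq> f" using dist by auto
  show False
  proof (cases "a \<le> 1")
    case True
    have "e \<le> 1 \<or> f \<le> 1" using HE_cover[OF ef] .
    moreover have "b \<le> 1 \<or> c \<le> 1" using HE_cover[OF bc] .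
    ultimately show False using True dd three_le1 by metis
  next
    case False
    then have "b \<le> 1" "d \<le> 1" "e \<le> 1" using HE_cover[OF ab] HE_cover[OF da] HE_cover[OF ae] by auto
    then show False using dd three_le1 by metis
  qed
qed

lemma H_edge_in:
  assumes uv: "HE k u v"
  shows "{u,v} \<in> {{0,1},{0,2}} \<union> (\<lambda>i. {0,i}) ` {3..k+2} \<union> (\<lambda>i. {1,i}) ` {3..k+2}"
proof -
  have "(u=0 \<and> v=1) \<or> (u=1 \<and> v=0) \<or> (u=0 \<and> v=2) \<or> (u=2 \<and> v=0) \<or>
     (u \<le> 1 \<and> 3 \<le> v \<and> v \<le> k+2) \<or> (v \<le> 1 \<and> 3 \<le> u \<and> u \<le> k+2)" using uv by (simp add: HE_def)
  then show ?thesis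
  proof (elim disjE)
    assume "u = 0 \<and> v = 1" then show ?thesis by simp
  next
    assume h: "u = 1 \<and> v = 0" have "{u,v} = {0,1}" using h by blast
    then show ?thesis by simp
  next
    assume "u = 0 \<and> v = 2" then show ?thesis by simp
  next
    assume h: "u = 2 \<and> v = 0" have "{u,v} = {0,2}" using h by blast
    then show ?thesis by simp
  next
    assume h: "u \<le> 1 \<and> 3 \<le> v \<and> v \<le> k + 2"
    then have vr: "v \<in> {3..k+2}" by simp
    have "u = 0 \<or> u = 1" using h by arith
    then show ?thesis
    proof
      assume "u = 0"
      then have "{u,v} \<in> (\<lambda>i. {0,i}) ` {3..k+2}" using vr by simp
      then show ?thesis by (rule UnI1[OF UnI2])
    next
      assume "u = 1"
      then have "{u,v} \<in> (\<lambda>i. {1,i}) ` {3..k+2}" using vr by simp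
      then show ?thesis by (rule UnI2)
    qed
  next
    assume h: "v \<le> 1 \<and> 3 \<le> u \<and> u \<le> k + 2"
    then have ur: "u \<in> {3..k+2}" by simp
    have uv: "{u,v} = {v,u}" by blast
    have "v = 0 \<or> v = 1" using h by arith
    then show ?thesis
    proof
      assume "v = 0"
      then have "{v,u} \<in> (\<lambda>i. {0,i}) ` {3..k+2}" using ur by simp
      then show ?thesis unfolding uv by (rule UnI1[OF UnI2])
    next
      assume "v = 1"
      then have "{v,u} \<in> (\<lambda>i. {1,i}) ` {3..k+2}" using ur by simp
      then show ?thesis unfolding uv by (rule UnI2)
    qed
  qed
qed

lemma H_edges_eq: "edges (HV k) (HE k) = {{0,1},{0,2}} \<union> (\<lambda>i. {0,i}) ` {3..k+2} \<union> (\<lambda>i. {1,i}) ` {3..k+2}"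
  (is "_ = ?R")
proof
  show "edges (HV k) (HE k) \<subseteq> ?R"
  proof
    fix s assume "s \<in> edges (HV k) (HE k)"
    then obtain u v where s: "s = {u,v}" and uv: "HE k u v" unfolding edges_def by blast
    show "s \<in> ?R" using H_edge_in[OF uv] unfolding s .
  qed
next
  have e: "{u,v} \<in> edges (HV k) (HE k)" if "u \<in> HV k" "v \<in> HV k" "HE k u v" for u v
    unfolding edges_def using that by blast
  show "?R \<subseteq> edges (HV k) (HE k)"
  proof
    fix s assume "s \<in> ?R"
    then consider "s = {0,1}" | "s = {0,2}" | i where "i \<in> {3..k+2}" "s = {0,i}"
       | i where "i \<in> {3..k+2}" "s = {1,i}" by blast
    then show "s \<in> edges (HV k) (HE k)"
    proof cases
      case 1 then show ?thesis using e[of 0 1] by (simp add: HV_def HE_def)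
    next
      case 2 then show ?thesis using e[of 0 2] by (simp add: HV_def HE_def)
    next
      case (3 i) then show ?thesis using e[of 0 i] by (simp add: HV_def HE_def)
    next
      case (4 i) then show ?thesis using e[of 1 i] by (simp add: HV_def HE_def)
    qed
  qed
qed

lemma H_num_edges: "num_edges (HV k) (HE k) = 2*k+2"
proof -
  have i0: "inj_on (\<lambda>i::nat. {0,i}) {3..k+2}" by (auto simp: inj_on_def doubleton_eq_iff)
  have i1: "inj_on (\<lambda>i::nat. {1,i}) {3..k+2}" by (auto simp: inj_on_def doubleton_eq_iff)
  have c2: "card {{0::nat,1},{0,2}} = 2" by (simp add: doubleton_eq_iff)
  have z1: "\<forall>s\<in>(\<lambda>i. {0::nat,i}) ` {3..k+2}. 1 \<notin> s \<and> 2 \<notin> s" by auto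
  have z2: "\<forall>s\<in>{{0::nat,1},{0,2}}. 1 \<in> s \<or> 2 \<in> s" by auto
  have d1: "{{0::nat,1},{0,2}} \<inter> (\<lambda>i. {0,i}) ` {3..k+2} = {}" using z1 z2 by blast
  have z3: "\<forall>s\<in>(\<lambda>i. {1::nat,i}) ` {3..k+2}. 0 \<notin> s" by auto
  have z4: "\<forall>s\<in>{{0::nat,1},{0,2}} \<union> (\<lambda>i. {0,i}) ` {3..k+2}. 0 \<in> s" by auto
  have d2: "({{0::nat,1},{0,2}} \<union> (\<lambda>i. {0,i}) ` {3..k+2}) \<inter> (\<lambda>i. {1,i}) ` {3..k+2} = {}"
    using z3 z4 by blast
  show ?thesis unfolding num_edges_def H_edges_eq
    by (subst card_Un_disjoint[OF _ _ d2], simp, simp, subst card_Un_disjoint[OF _ _ d1], simp, simp)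
       (use c2 card_image[OF i0] card_image[OF i1] in simp)
qed


definition HL :: "nat \<Rightarrow> nat set" where "HL k = {3..k+2}"
lemma HL_fin[simp]: "finite (HL k)" by (simp add: HL_def)
lemma HL_card[simp]: "card (HL k) = k" by (simp add: HL_def)
lemma HL_nin[simp]: "0 \<notin> HL k" "1 \<notin> HL k" "2 \<notin> HL k" "Suc 0 \<notin> HL k" by (auto simp: HL_def)
lemma HL_HV: "i \<in> HL k \<Longrightarrow> i \<in> HV k" by (auto simp: HL_def HV_def)

lemma H_nb0: "nbhd (HV k) (HE k) 0 = insert 1 (insert 2 (HL k))"
  unfolding nbhd_def HV_def HE_def HL_def by auto
lemma H_nb1: "nbhd (HV k) (HE k) 1 = insert 0 (HL k)"
  unfolding nbhd_def HV_def HE_def HL_def by auto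
lemma H_nb1': "nbhd (HV k) (HE k) (Suc 0) = insert 0 (HL k)"
  using H_nb1 by simp
lemma H_nb2: "nbhd (HV k) (HE k) 2 = {0}"
  unfolding nbhd_def HV_def HE_def HL_def by auto
lemma H_nbL: "i \<in> HL k \<Longrightarrow> nbhd (HV k) (HE k) i = {0,1}"
  unfolding nbhd_def HV_def HE_def HL_def by auto

lemma HV_cases: "v \<in> HV k \<Longrightarrow> v = 0 \<or> v = 1 \<or> v = 2 \<or> v \<in> HL k"
  unfolding HV_def HL_def by auto

definition Hy :: "nat \<Rightarrow> real \<Rightarrow> nat \<Rightarrow> real" where
  "Hy k l i = (if i = 0 then l*(l^2 - real k) else if i = 1 then l^2 + real k * l
     else if i = 2 then l^2 - real k else l*(l+1))"

lemma H_eig: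
  fixes l :: real
  assumes P: "l^4 - (2*real k+2)*l^2 - 2*real k*l + real k = 0" and l: "l^2 > real k"
  shows "adj_eigvec (HV k) (HE k) l (Hy k l)"
  unfolding adj_eigvec_def
proof (intro conjI ballI)
  show "\<exists>v\<in>HV k. Hy k l v \<noteq> 0"
    using l by (intro bexI[of _ 2]) (auto simp: Hy_def HV_def)
next
  fix v assume v: "v \<in> HV k"
  have sL: "(\<Sum>i\<in>HL k. Hy k l i) = real k * (l*(l+1))"
  proof -
    have "(\<Sum>i\<in>HL k. Hy k l i) = (\<Sum>i\<in>HL k. l*(l+1))"
      by (rule sum.cong) (auto simp: Hy_def HL_def)
    then show ?thesis by simp
  qed
  from HV_cases[OF v] show "(\<Sum>u\<in>nbhd (HV k) (HE k) v. Hy k l u) = l * Hy k l v"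
  proof (elim disjE)
    assume "v = 0"
    then have "(\<Sum>u\<in>nbhd (HV k) (HE k) v. Hy k l u) = Hy k l 1 + (Hy k l 2 + (\<Sum>i\<in>HL k. Hy k l i))"
      by (simp add: H_nb0)
    also have "\<dots> = l * Hy k l v" using P \<open>v = 0\<close> unfolding sL
      by (simp add: Hy_def algebra_simps power2_eq_square) (simp add: eval_nat_numeral algebra_simps)
    finally show ?thesis .
  next
    assume "v = 1"
    then have "(\<Sum>u\<in>nbhd (HV k) (HE k) v. Hy k l u) = Hy k l 0 + (\<Sum>i\<in>HL k. Hy k l i)"
      by (simp add: H_nb1 H_nb1')
    also have "\<dots> = l * Hy k l v" using \<open>v = 1\<close> unfolding sL
      by (simp add: Hy_def algebra_simps power2_eq_square)
    finally show ?thesis .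
  next
    assume "v = 2"
    then show ?thesis by (simp add: H_nb2 Hy_def algebra_simps power2_eq_square)
  next
    assume vL: "v \<in> HL k"
    then have "(\<Sum>u\<in>nbhd (HV k) (HE k) v. Hy k l u) = Hy k l 0 + Hy k l 1"
      by (simp add: H_nbL)
    moreover have "v \<noteq> 0" "v \<noteq> 1" "v \<noteq> 2" using vL by (auto simp: HL_def)
    ultimately show ?thesis
      by (simp add: Hy_def algebra_simps power2_eq_square eval_nat_numeral)
  qed
qed

lemma H_fin:
  assumes k2: "k \<ge> 2"
  shows "finite {\<mu>. adj_eigenvalue (HV k) (HE k) \<mu>}"
proof -
  define K where "K = real k"
  have K2: "K \<ge> 2" using k2 unfolding K_def by simp
  define p where "p = [:K, -2*K, -(2*K+2), 0, 1:]"
  have p0: "p \<noteq> 0" unfolding p_def by simp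
  have pe: "poly p t = t^4 - (2*K+2)*t^2 - 2*K*t + K" for t
    unfolding p_def by (simp add: algebra_simps eval_nat_numeral)
  have "{\<mu>. adj_eigenvalue (HV k) (HE k) \<mu>} \<subseteq> insert 0 {t. poly p t = 0}"
  proof
    fix \<mu> assume "\<mu> \<in> {\<mu>. adj_eigenvalue (HV k) (HE k) \<mu>}"
    then obtain y where ev: "adj_eigvec (HV k) (HE k) \<mu> y" unfolding adj_eigenvalue_def by auto
    show "\<mu> \<in> insert 0 {t. poly p t = 0}"
    proof (cases "\<mu> = 0")
      case True then show ?thesis by simp
    next
      case mu: False
      have nz: "\<exists>v\<in>HV k. y v \<noteq> 0" and eq: "\<And>v. v \<in> HV k \<Longrightarrow> (\<Sum>u\<in>nbhd (HV k) (HE k) v. y u) = \<mu> * y v"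
        using ev unfolding adj_eigvec_def by auto
      define a where "a = (y 0 + y 1) / \<mu>"
      have EL: "\<mu> * a = y 0 + y 1" unfolding a_def using mu by simp
      have leaf: "y i = a" if "i \<in> HL k" for i
      proof -
        have "i \<in> HV k" using that by (rule HL_HV)
        from eq[OF this] have "y 0 + y 1 = \<mu> * y i" using that by (simp add: H_nbL)
        then show ?thesis unfolding a_def using mu by (simp add: field_simps)
      qed
      have sL: "(\<Sum>i\<in>HL k. y i) = K * a"
      proof -
        have "(\<Sum>i\<in>HL k. y i) = (\<Sum>i\<in>HL k. a)" by (rule sum.cong) (auto simp: leaf)
        then show ?thesis by (simp add: K_def)
      qed
      have in0: "0 \<in> HV k" and in1: "1 \<in> HV k" and in2: "2 \<in> HV k" by (auto simp: HV_def)
      have E2: "\<mu> * y 2 = y 0" using eq[OF in2] by (simp add: H_nb2)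
      have E1: "\<mu> * y 1 = y 0 + K * a" using eq[OF in1] sL by (simp add: H_nb1 H_nb1')
      have E0: "\<mu> * y 0 = y 1 + y 2 + K * a" using eq[OF in0] sL by (simp add: H_nb0)
      have ii: "(\<mu>^2 - K) * y 1 = (\<mu> + K) * y 0"
      proof -
        have "(\<mu>^2 - K) * y 1 - (\<mu> + K) * y 0 = \<mu> * (\<mu> * y 1 - y 0 - K * a) + K * (\<mu> * a - y 0 - y 1)"
          by (simp add: algebra_simps power2_eq_square)
        then show ?thesis using E1 EL by simp
      qed
      have iii: "(\<mu>^2 - K) * a = (\<mu> + 1) * y 0"
      proof -
        have "(\<mu>^2 - K) * a - (\<mu> + 1) * y 0 = \<mu> * (\<mu> * a - y 0 - y 1) + (\<mu> * y 1 - y 0 - K * a)"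
          by (simp add: algebra_simps power2_eq_square)
        then show ?thesis using E1 EL by simp
      qed
      have Py: "poly p \<mu> * y 0 = 0"
      proof -
        have "poly p \<mu> * y 0 = \<mu>*(\<mu>^2-K)*(\<mu>*y 0 - y 1 - y 2 - K*a) + \<mu>*((\<mu>^2-K)*y 1 - (\<mu>+K)*y 0)
            + (\<mu>^2-K)*(\<mu>*y 2 - y 0) + K*\<mu>*((\<mu>^2-K)*a - (\<mu>+1)*y 0)"
          unfolding pe by (simp add: algebra_simps eval_nat_numeral)
        then show ?thesis using E0 E2 ii iii by simp
      qed
      have "y 0 \<noteq> 0"
      proof
        assume y0: "y 0 = 0"
        have y2: "y 2 = 0" using E2 y0 mu by simp
        have a1: "y 1 + K * a = 0" using E0 y0 y2 by simp
        have a2: "\<mu> * a = y 1" using EL y0 by simp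
        have a3: "(\<mu>^2 - K) * a = 0" using iii y0 by simp
        have a0: "a = 0"
        proof (rule ccontr)
          assume an: "a \<noteq> 0"
          have "(\<mu> + K) * a = 0" using a1 a2 by (simp add: algebra_simps)
          then have m: "\<mu> = -K" using an by simp
          have "\<mu>^2 = K" using a3 an by simp
          then have "K * K = K" using m by (simp add: power2_eq_square)
          then have "K * (K - 1) = 0" by (simp add: algebra_simps)
          then show False using K2 by simp
        qed
        have y1: "y 1 = 0" using a2 a0 by simp
        have "\<forall>v\<in>HV k. y v = 0"
        proof
          fix v assume "v \<in> HV k"
          from HV_cases[OF this] show "y v = 0" using y0 y1 y2 leaf a0 by auto
        qed
        then show False using nz by auto
      qed
      then have "poly p \<mu> = 0" using Py by simp
      then show ?thesis by simp
    qed
  qed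
  moreover have "finite (insert 0 {t. poly p t = 0})" using poly_roots_finite[OF p0] by simp
  ultimately show ?thesis by (rule finite_subset)
qed

lemma H_lower:
  assumes k2: "k \<ge> 2"
  shows "\<exists>l. l > 0 \<and> l^2 - l > 2 * real k \<and> l \<le> spectral_radius (HV k) (HE k)"
proof -
  define K where "K = real k"
  have K2: "K \<ge> 2" using k2 unfolding K_def by simp
  define f where "f t = t^4 - (2*K+2)*t^2 - 2*K*t + K" for t :: real
  define s where "s = sqrt (8*K+1)"
  have s2: "s^2 = 8*K+1" unfolding s_def using K2 by simp
  have s1: "s \<ge> 1" unfolding s_def using K2 by simp
  define r where "r = (1 + s)/2"
  have r1: "r \<ge> 1" unfolding r_def using s1 by simp
  have rr: "r^2 = r + 2*K" unfolding r_def using s2 by (simp add: power2_eq_square field_simps) 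
  have fr: "f r = - r - K"
  proof -
    have "f r = (r^2)^2 - (2*K+2)*r^2 - 2*K*r + K" unfolding f_def by (simp add: eval_nat_numeral)
    also have "\<dots> = (r + 2*K)^2 - (2*K+2)*(r + 2*K) - 2*K*r + K" unfolding rr ..
    also have "\<dots> = r^2 - 2*r - 3*K" by (simp add: algebra_simps power2_eq_square)
    also have "\<dots> = - r - K" unfolding rr by simp
    finally show ?thesis .
  qed
  define b where "b = 2*K+2"
  have b6: "b \<ge> 6" unfolding b_def using K2 by simp
  have fb: "f b > 0"
  proof -
    have "f b = b^2 * (b^2 - b - 1) + (5/2)*b - 1" unfolding f_def b_def
      by (simp add: algebra_simps eval_nat_numeral power2_eq_square)
    moreover have "b^2 - b - 1 > 0"
    proof -
      have "b*b \<ge> 6*b" using mult_right_mono[OF b6, of b] b6 by simp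
      then show ?thesis using b6 unfolding power2_eq_square by linarith
    qed
    moreover have "b^2 > 0" using b6 by simp
    ultimately show ?thesis using b6 mult_pos_pos[of "b^2" "b^2 - b - 1"] by linarith
  qed
  have rb: "r \<le> b"
  proof -
    have "s \<le> 4*K+3"
    proof (rule ccontr)
      assume "\<not> s \<le> 4*K+3"
      then have "s^2 > (4*K+3)^2" using K2 by (intro power_strict_mono) auto
      moreover have "(4*K+3)^2 = 16*(K*K) + 24*K + 9" by (simp add: power2_eq_square algebra_simps)
      moreover have "K*K \<ge> 0" by simp
      ultimately show False using s2 K2 by linarith
    qed
    then show ?thesis unfolding r_def b_def by simp
  qed
  have cont: "continuous_on {r..b} f" unfolding f_def by (intro continuous_intros)
  have fr0: "f r \<le> 0" using fr r1 K2 by linarith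
  have fb0: "0 \<le> f b" using fb by linarith
  obtain l where lr: "r \<le> l" and lb: "l \<le> b" and fl: "f l = 0"
    using IVT'[of f r 0 b, OF fr0 fb0 rb cont] by blast
  have "l \<noteq> r" using fl fr r1 K2 by auto
  then have lgt: "l > r" using lr by simp
  have l2: "l^2 - l > 2*K"
  proof -
    have "(l^2 - l) - (r^2 - r) = (l - r) * (l + r - 1)" by (simp add: algebra_simps power2_eq_square)
    moreover have "(l - r) * (l + r - 1) > 0" using lgt r1 by simp
    ultimately show ?thesis using rr by simp
  qed
  have lK: "l^2 > K" using l2 lgt r1 K2 by simp
  have "adj_eigvec (HV k) (HE k) l (Hy k l)"
    by (rule H_eig) (use fl lK in \<open>simp_all add: f_def K_def\<close>)
  then have "l \<in> {\<mu>. adj_eigenvalue (HV k) (HE k) \<mu>}" unfolding adj_eigenvalue_def by auto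
  then have "l \<le> spectral_radius (HV k) (HE k)" unfolding spectral_radius_def
    using H_fin[OF k2] by (rule Max_ge[rotated])
  then show ?thesis using l2 lgt r1 unfolding K_def by (intro exI[of _ l]) auto
qed

lemma graph_E: "graph V E \<Longrightarrow> E u v \<Longrightarrow> u \<in> V \<and> v \<in> V \<and> u \<noteq> v \<and> E v u"
  unfolding graph_def by blast

lemma graph_fin: "graph V E \<Longrightarrow> finite V"
  unfolding graph_def by blast

lemma nbhd_sub: "nbhd V E v \<subseteq> V" unfolding nbhd_def by auto

lemma edges_fin: "graph V E \<Longrightarrow> finite (edges V E)"
proof -
  assume g: "graph V E"
  have "edges V E \<subseteq> Pow V" unfolding edges_def by auto
  moreover have "finite (Pow V)" using graph_fin[OF g] by simp
  ultimately show ?thesis by (rule finite_subset)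
qed

lemma edge_count:
  assumes gr: "graph V E" and us: "ustar \<in> V" and Nd: "N = nbhd V E ustar"
    and a: "a \<in> N" "a' \<in> N" "E a a'" and b: "b \<in> N" "b' \<in> N" "E b b'" and ne: "{a,a'} \<noteq> {b,b'}"
  shows "card N + (\<Sum>v\<in>N. card (nbhd V E v - N - {ustar})) + 2 \<le> num_edges V E"
proof -
  have finV: "finite V" using graph_fin[OF gr] .
  have NV: "N \<subseteq> V" unfolding Nd by (rule nbhd_sub)
  have finN: "finite N" using finite_subset[OF NV finV] .
  have uN: "ustar \<notin> N" unfolding Nd nbhd_def using graph_E[OF gr] by blast
  define S1 where "S1 = (\<lambda>v. {ustar, v}) ` N"
  define Sg where "Sg = (SIGMA v:N. nbhd V E v - N - {ustar})"
  define S2 where "S2 = (\<lambda>(v,w). {v,w}) ` Sg"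
  define T where "T = {{a,a'},{b,b'}}"
  have finB: "\<forall>v\<in>N. finite (nbhd V E v - N - {ustar})"
    using finite_subset[OF nbhd_sub finV] by blast
  have cS1: "card S1 = card N" unfolding S1_def
    by (rule card_image) (use uN in \<open>auto simp: inj_on_def doubleton_eq_iff\<close>)
  have inj2: "inj_on (\<lambda>(v,w). {v,w}) Sg"
  proof (rule inj_onI)
    fix p q assume p: "p \<in> Sg" and q: "q \<in> Sg" and eq: "(\<lambda>(v,w). {v,w}) p = (\<lambda>(v,w). {v,w}) q"
    obtain v w where pv: "p = (v,w)" by (cases p)
    obtain v' w' where qv: "q = (v',w')" by (cases q)
    have "v \<in> N" "w \<notin> N" "v' \<in> N" "w' \<notin> N" using p q unfolding pv qv Sg_def by auto
    moreover have "{v,w} = {v',w'}" using eq unfolding pv qv by simp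
    ultimately show "p = q" unfolding pv qv by (auto simp: doubleton_eq_iff)
  qed
  have "card S2 = card Sg" unfolding S2_def by (rule card_image[OF inj2])
  also have "card Sg = (\<Sum>v\<in>N. card (nbhd V E v - N - {ustar}))"
    unfolding Sg_def using finN finB by (intro card_SigmaI) auto
  finally have cS2: "card S2 = (\<Sum>v\<in>N. card (nbhd V E v - N - {ustar}))" .
  have aa: "a \<noteq> a'" using graph_E[OF gr a(3)] by simp
  have cT: "card T = 2" unfolding T_def using ne aa by simp
  have d12: "S1 \<inter> S2 = {}"
  proof -
    have "\<forall>s\<in>S1. ustar \<in> s" unfolding S1_def by auto
    moreover have "\<forall>s\<in>S2. ustar \<notin> s" unfolding S2_def Sg_def using uN by auto
    ultimately show ?thesis by blast
  qed
  have d3: "(S1 \<union> S2) \<inter> T = {}"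
  proof -
    have "\<forall>s\<in>S1. ustar \<in> s" unfolding S1_def by auto
    moreover have "\<forall>s\<in>S2. \<not> s \<subseteq> N" unfolding S2_def Sg_def by auto
    moreover have "\<forall>s\<in>T. s \<subseteq> N \<and> ustar \<notin> s" unfolding T_def using a b uN by auto
    ultimately show ?thesis by blast
  qed
  have sub: "S1 \<union> S2 \<union> T \<subseteq> edges V E"
  proof -
    have "S1 \<subseteq> edges V E"
    proof
      fix s assume "s \<in> S1"
      then obtain v where v: "v \<in> N" "s = {ustar, v}" unfolding S1_def by auto
      then have "E ustar v" "v \<in> V" unfolding Nd nbhd_def by auto
      then show "s \<in> edges V E" unfolding edges_def using v us by blast
    qed
    moreover have "S2 \<subseteq> edges V E"
    proof
      fix s assume "s \<in> S2"
      then obtain v w where v: "v \<in> N" "w \<in> nbhd V E v" "s = {v, w}" unfolding S2_def Sg_def by auto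
      then have "E v w" "v \<in> V" "w \<in> V" using NV unfolding nbhd_def by auto
      then show "s \<in> edges V E" unfolding edges_def using v by blast
    qed
    moreover have "T \<subseteq> edges V E"
    proof -
      have "a \<in> V" "a' \<in> V" "b \<in> V" "b' \<in> V" using a b NV by auto
      then show ?thesis unfolding T_def edges_def using a(3) b(3) by blast
    qed
    ultimately show ?thesis by blast
  qed
  have finS: "finite S1" "finite S2" "finite T"
    using finite_subset[OF sub edges_fin[OF gr]] by auto
  have "card (S1 \<union> S2 \<union> T) = card S1 + card S2 + card T"
    using finS d12 d3 by (simp add: card_Un_disjoint)
  moreover have "card (S1 \<union> S2 \<union> T) \<le> card (edges V E)"
    by (rule card_mono[OF edges_fin[OF gr] sub])
  ultimately show ?thesis unfolding num_edges_def using cS1 cS2 cT by simp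
qed

lemma inner_bound:
  fixes x :: "'a \<Rightarrow> real"
  assumes gr: "graph V E" and NV: "N \<subseteq> V" and deg: "\<forall>w\<in>N. card (nbhd V E w \<inter> N) \<le> 1"
    and xpos: "\<forall>v\<in>V. x v > 0"
  shows "(\<Sum>v\<in>N. \<Sum>w\<in>nbhd V E v \<inter> N. x w) \<le> (\<Sum>w\<in>N. x w)"
proof -
  have finN: "finite N" using finite_subset[OF NV graph_fin[OF gr]] .
  have "(\<Sum>v\<in>N. \<Sum>w\<in>nbhd V E v \<inter> N. x w) = (\<Sum>v\<in>N. \<Sum>w\<in>N. if E v w then x w else 0)"
  proof (rule sum.cong[OF refl])
    fix v assume "v \<in> N"
    have "nbhd V E v \<inter> N = {w\<in>N. E v w}" using NV unfolding nbhd_def by auto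
    then show "(\<Sum>w\<in>nbhd V E v \<inter> N. x w) = (\<Sum>w\<in>N. if E v w then x w else 0)"
      using sum.inter_filter[OF finN] by simp
  qed
  also have "\<dots> = (\<Sum>w\<in>N. \<Sum>v\<in>N. if E v w then x w else 0)" by (rule sum.swap)
  also have "\<dots> \<le> (\<Sum>w\<in>N. x w)"
  proof (rule sum_mono)
    fix w assume w: "w \<in> N"
    have "(\<Sum>v\<in>N. if E v w then x w else 0) = (\<Sum>v\<in>{v\<in>N. E v w}. x w)"
      by (rule sum.inter_filter[OF finN, symmetric])
    also have "\<dots> = real (card {v\<in>N. E v w}) * x w" by simp
    also have "{v\<in>N. E v w} = nbhd V E w \<inter> N"
      using NV graph_E[OF gr] unfolding nbhd_def by auto
    also have "real (card (nbhd V E w \<inter> N)) * x w \<le> 1 * x w"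
    proof (rule mult_right_mono)
      show "real (card (nbhd V E w \<inter> N)) \<le> 1" using deg w by simp
      show "0 \<le> x w" using xpos w NV by (auto intro: less_imp_le)
    qed
    finally show "(\<Sum>v\<in>N. if E v w then x w else 0) \<le> x w" by simp
  qed
  finally show ?thesis .
qed

theorem claim2:
  fixes V :: "'a set" and E :: "'a \<Rightarrow> 'a \<Rightarrow> bool"
    and m :: nat and x :: "'a \<Rightarrow> real" and ustar :: 'a
  assumes "m \<ge> 38" and "even m"
    and "graph V E" and "H43_free V E" and "num_edges V E = m" and "no_isolated V E"
    and extremal: "\<And>V' (E' :: nat \<Rightarrow> nat \<Rightarrow> bool).
           graph V' E' \<Longrightarrow> H43_free V' E' \<Longrightarrow> num_edges V' E' = m \<Longrightarrow> no_isolated V' E' \<Longrightarrow>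
           spectral_radius V' E' \<le> spectral_radius V E"
    and "perron_vector V E x"
    and "ustar \<in> V" and "\<forall>v\<in>V. x v \<le> x ustar"
  shows "induced_connected E {v \<in> nbhd V E ustar. card (nbhd V E v \<inter> nbhd V E ustar) \<ge> 1}"
proof -
  note m38 = assms(1) and mev = assms(2) and gr = assms(3) and fr = assms(4) and ne = assms(5)
    and pv = assms(8) and us = assms(9) and umax = assms(10)
  define \<rho> where "\<rho> = spectral_radius V E"
  define N where "N = nbhd V E ustar"
  define A where "A = {v \<in> nbhd V E ustar. card (nbhd V E v \<inter> nbhd V E ustar) \<ge> 1}"
  have finV: "finite V" using graph_fin[OF gr] .
  have NV: "N \<subseteq> V" unfolding N_def by (rule nbhd_sub)
  have finN: "finite N" using finite_subset[OF NV finV] .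
  have uN: "ustar \<notin> N" unfolding N_def nbhd_def using graph_E[OF gr] by blast
  have EN: "\<And>v. v \<in> N \<longleftrightarrow> v \<in> V \<and> E ustar v" unfolding N_def nbhd_def by auto
  have xpos: "\<forall>v\<in>V. x v > 0" and eig: "\<And>v. v \<in> V \<Longrightarrow> (\<Sum>u\<in>nbhd V E v. x u) = \<rho> * x v"
    using pv unfolding perron_vector_def adj_eigvec_def \<rho>_def by auto
  have xs: "x ustar > 0" using xpos us by auto
  obtain j where mj: "m = 2 * j" using mev by (auto elim: evenE)
  define k where "k = j - 1"
  have mk: "m = 2*k+2" and k2: "k \<ge> 2" using mj m38 unfolding k_def by auto
  obtain l where l0: "l > 0" and l2: "l^2 - l > 2 * real k" and lle: "l \<le> spectral_radius (HV k) (HE k)"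
    using H_lower[OF k2] by blast
  have "spectral_radius (HV k) (HE k) \<le> \<rho>" unfolding \<rho>_def
    by (rule extremal[OF H_graph H_free _ H_noiso]) (simp add: H_num_edges mk)
  with lle have lr: "l \<le> \<rho>" by simp
  have l1: "l > 1"
  proof (rule ccontr)
    assume "\<not> l > 1"
    then have "l * l \<le> 1 * l" using l0 by (intro mult_right_mono) auto
    then show False using l2 by (simp add: power2_eq_square)
  qed
  have rho_bd: "\<rho>^2 - \<rho> > real m - 2"
  proof -
    have "(\<rho>^2 - \<rho>) - (l^2 - l) = (\<rho> - l) * (\<rho> + l - 1)" by (simp add: algebra_simps power2_eq_square)
    moreover have "(\<rho> - l) * (\<rho> + l - 1) \<ge> 0" using lr l1 by simp
    ultimately show ?thesis using l2 mk by simp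
  qed
  show ?thesis
  proof (rule ccontr)
    assume nc0: "\<not> ?thesis"
    have nc: "\<not> induced_connected E A" using nc0 unfolding A_def .
    define R where "R = (\<lambda>u v. u \<in> A \<and> v \<in> A \<and> E u v)"
    from nc obtain a b where aA: "a \<in> A" and bA: "b \<in> A" and nab: "\<not> R\<^sup>*\<^sup>* a b"
      unfolding induced_connected_def R_def by blast
    have Rsym1: "R u v \<Longrightarrow> R v u" for u v unfolding R_def using graph_E[OF gr] by blast
    have Rsym: "R\<^sup>*\<^sup>* u v \<Longrightarrow> R\<^sup>*\<^sup>* v u" for u v
    proof (induction rule: rtranclp_induct)
      case base then show ?case by simp
    next
      case (step y z)
      then show ?case using Rsym1 by (meson converse_rtranclp_into_rtranclp)
    qed
    have AN: "A \<subseteq> N" unfolding A_def N_def by auto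
    have inA: "w \<in> A" if "w \<in> N" "w' \<in> N" "E w w'" for w w'
    proof -
      have "w' \<in> nbhd V E w \<inter> N" using that NV unfolding nbhd_def by auto
      moreover have "finite (nbhd V E w \<inter> N)" using finN by simp
      ultimately have "card (nbhd V E w \<inter> N) \<ge> 1"
        by (metis One_nat_def Suc_leI card_gt_0_iff empty_iff)
      then show ?thesis using that unfolding A_def N_def by simp
    qed
    have partner: "\<exists>w'. w' \<in> A \<and> E w w'" if "w \<in> A" for w
    proof -
      have "card (nbhd V E w \<inter> N) \<ge> 1" using that unfolding A_def N_def by simp
      then have "nbhd V E w \<inter> N \<noteq> {}" by auto
      then obtain w' where "w' \<in> nbhd V E w" "w' \<in> N" by blast
      then have w': "w' \<in> N" "E w w'" unfolding nbhd_def by auto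
      then have "E w' w" using graph_E[OF gr] by blast
      then have "w' \<in> A" using inA[OF w'(1), of w] that AN by blast
      then show ?thesis using w' by blast
    qed
    obtain a' where a'A: "a' \<in> A" and aa': "E a a'" using partner[OF aA] by blast
    obtain b' where b'A: "b' \<in> A" and bb': "E b b'" using partner[OF bA] by blast
    have key: False if cA: "c \<in> A" and c'A: "c' \<in> A" and cc': "E c c'" and wN: "w \<in> N"
      and pN: "p \<in> N" and qN: "q \<in> N" and wp: "E w p" and wq: "E w q" and pq: "p \<noteq> q"
      and ncw: "\<not> R\<^sup>*\<^sup>* c w" for c c' w p q
    proof -
      have pw: "E p w" and qw: "E q w" using wp wq graph_E[OF gr] by blast+
      have wA: "w \<in> A" using inA[OF wN pN wp] .
      have pA: "p \<in> A" using inA[OF pN wN pw] .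
      have qA: "q \<in> A" using inA[OF qN wN qw] .
      have "R c' c" unfolding R_def using cA c'A cc' graph_E[OF gr] by blast
      then have Rc'c: "R\<^sup>*\<^sup>* c' c" by (rule r_into_rtranclp)
      have far: "z \<noteq> c \<and> z \<noteq> c'" if "R\<^sup>*\<^sup>* w z" for z
      proof
        show "z \<noteq> c" using that ncw Rsym by blast
        show "z \<noteq> c'"
        proof
          assume "z = c'"
          then have "R\<^sup>*\<^sup>* w c" using that Rc'c by (meson rtranclp_trans)
          then show False using ncw Rsym by blast
        qed
      qed
      have "R w p" unfolding R_def using wA pA wp by blast
      then have "R\<^sup>*\<^sup>* w p" by (rule r_into_rtranclp)
      then have fp: "p \<noteq> c \<and> p \<noteq> c'" by (rule far)
      have "R w q" unfolding R_def using wA qA wq by blast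
      then have "R\<^sup>*\<^sup>* w q" by (rule r_into_rtranclp)
      then have fq: "q \<noteq> c \<and> q \<noteq> c'" by (rule far)
      have fw: "w \<noteq> c \<and> w \<noteq> c'" using far[of w] by simp
      have cN: "c \<in> N" and c'N: "c' \<in> N" using cA c'A AN by auto
      have neq: "ustar \<noteq> p" "ustar \<noteq> w" "ustar \<noteq> q" "ustar \<noteq> c" "ustar \<noteq> c'"
        using uN pN wN qN cN c'N by auto
      have neq2: "p \<noteq> w" "w \<noteq> q" "c \<noteq> c'" using wp wq cc' graph_E[OF gr] by blast+
      have dist: "distinct [ustar, p, w, q, c, c']" using neq neq2 fp fq fw pq by auto
      have e1: "E ustar p" "E ustar q" "E ustar c" "E ustar c'" using pN qN cN c'N EN by auto
      have e2: "E q ustar" "E c' ustar" using e1 graph_E[OF gr] by blast+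
      have vs: "p \<in> V" "w \<in> V" "q \<in> V" "c \<in> V" "c' \<in> V" using pN wN qN cN c'N NV by auto
      show False using fr unfolding H43_free_def
        using us vs dist e1 e2 pw wq cc' by blast
    qed
    have deg: "\<forall>w\<in>N. card (nbhd V E w \<inter> N) \<le> 1"
    proof
      fix w assume wN: "w \<in> N"
      have "\<forall>p\<in>nbhd V E w \<inter> N. \<forall>q\<in>nbhd V E w \<inter> N. p = q"
      proof (intro ballI)
        fix p q assume p: "p \<in> nbhd V E w \<inter> N" and q: "q \<in> nbhd V E w \<inter> N"
        show "p = q"
        proof (rule ccontr)
          assume pq: "p \<noteq> q"
          have pN: "p \<in> N" and qN: "q \<in> N" and wp: "E w p" and wq: "E w q"
            using p q unfolding nbhd_def by auto
          show False
          proof (cases "R\<^sup>*\<^sup>* a w")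
            case False
            then show False using key[OF aA a'A aa' wN pN qN wp wq pq] by blast
          next
            case True
            have "\<not> R\<^sup>*\<^sup>* b w"
            proof
              assume "R\<^sup>*\<^sup>* b w"
              then have "R\<^sup>*\<^sup>* w b" by (rule Rsym)
              then show False using True nab by (meson rtranclp_trans)
            qed
            then show False using key[OF bA b'A bb' wN pN qN wp wq pq] by blast
          qed
        qed
      qed
      then show "card (nbhd V E w \<inter> N) \<le> 1"
        using card_le_Suc0_iff_eq[of "nbhd V E w \<inter> N"] finN by simp
    qed
    define c where "c = (\<Sum>v\<in>N. card (nbhd V E v - N - {ustar}))"
    have e0: "\<rho> * x ustar = (\<Sum>v\<in>N. x v)" using eig[OF us] unfolding N_def by simp
    have split: "(\<Sum>w\<in>nbhd V E v. x w) \<le> x ustar + (\<Sum>w\<in>nbhd V E v \<inter> N. x w)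
        + real (card (nbhd V E v - N - {ustar})) * x ustar" if v: "v \<in> N" for v
    proof -
      have fin: "finite (nbhd V E v)" using finite_subset[OF nbhd_sub finV] .
      have "E v ustar" using v EN graph_E[OF gr] by blast
      then have uin: "ustar \<in> nbhd V E v" using us unfolding nbhd_def by simp
      have s1: "(\<Sum>w\<in>nbhd V E v. x w) = (\<Sum>w\<in>nbhd V E v \<inter> N. x w) + (\<Sum>w\<in>nbhd V E v - N. x w)"
        by (rule sum.Int_Diff[OF fin])
      have s2: "(\<Sum>w\<in>nbhd V E v - N. x w) = (\<Sum>w\<in>(nbhd V E v - N) \<inter> {ustar}. x w) + (\<Sum>w\<in>nbhd V E v - N - {ustar}. x w)"
        by (rule sum.Int_Diff) (use fin in simp)
      have s3: "(nbhd V E v - N) \<inter> {ustar} = {ustar}" using uin uN by auto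
      have s4: "(\<Sum>w\<in>nbhd V E v - N - {ustar}. x w) \<le> real (card (nbhd V E v - N - {ustar})) * x ustar"
      proof (rule sum_bounded_above)
        fix w assume "w \<in> nbhd V E v - N - {ustar}"
        then have "w \<in> V" unfolding nbhd_def by simp
        then show "x w \<le> x ustar" using umax by simp
      qed
      show ?thesis using s1 s2 s3 s4 by simp
    qed
    have "\<rho>^2 * x ustar = (\<Sum>v\<in>N. \<rho> * x v)"
      by (simp add: power2_eq_square e0 sum_distrib_left mult.assoc)
    also have "\<dots> = (\<Sum>v\<in>N. \<Sum>w\<in>nbhd V E v. x w)"
      by (rule sum.cong[OF refl]) (use NV eig in auto)
    also have "\<dots> \<le> (\<Sum>v\<in>N. x ustar + (\<Sum>w\<in>nbhd V E v \<inter> N. x w)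
        + real (card (nbhd V E v - N - {ustar})) * x ustar)"
      by (rule sum_mono) (rule split)
    also have "\<dots> = real (card N) * x ustar + (\<Sum>v\<in>N. \<Sum>w\<in>nbhd V E v \<inter> N. x w) + real c * x ustar"
      unfolding c_def by (simp add: sum.distrib sum_distrib_right)
    also have "\<dots> \<le> real (card N) * x ustar + \<rho> * x ustar + real c * x ustar"
      using inner_bound[OF gr NV deg xpos] e0 by simp
    finally have "\<rho>^2 * x ustar \<le> (real (card N) + \<rho> + real c) * x ustar"
      by (simp add: algebra_simps)
    then have ineq: "\<rho>^2 \<le> real (card N) + \<rho> + real c" using xs by simp
    have neqab: "{a,a'} \<noteq> {b,b'}"
    proof
      assume "{a,a'} = {b,b'}"
      then have "a = b \<or> a = b'" by (auto simp: doubleton_eq_iff)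
      moreover have "R b b'" unfolding R_def using bA b'A bb' by blast
      then have "R\<^sup>*\<^sup>* b b'" by (rule r_into_rtranclp)
      ultimately have "R\<^sup>*\<^sup>* a b" using Rsym by auto
      then show False using nab by simp
    qed
    have "card N + c + 2 \<le> num_edges V E" unfolding c_def
      by (rule edge_count[OF gr us N_def]) (use aA a'A bA b'A AN aa' bb' neqab in auto)
    then have "real (card N) + real c + 2 \<le> real m" using ne by linarith
    then show False using ineq rho_bd by linarith
  qed
qed

end
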